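(* In the truncated Gale–Shapley algorithm described in the context, with a weight function $w$ respecting the preferences, for every $i\ge 2$ we have $w(L_i)\ge (i-1)\,f_i(R)$.
   Context: Instance: a simple bipartite graph $\mathcal{G}=(R\cup B,E)$ (red nodes $R$, blue nodes $B$) without isolated nodes, each node having a linear preference order on its neighbours. Algorithm (distributed Gale–Shapley): each blue $b$ keeps $p(b)$ (current partner or $\bot$), initially $\bot$. Each red $r$ keeps a list $C(r)$, initially all neighbours in decreasing preference; $c(r)$ (candidate awaiting response, or $\bot$), initially $\bot$; $p(r)$ (partner or $\bot$), initially $\bot$. Each round consists of a blue turn then a red turn. Blue turn, for each $b$: let $P$ be the set of neighbours that sent `propose'; if $P=\emptyset$ do nothing. Otherwise let $Q=P\cup\{p(b)\}$ if $p(b)\ne\bot$, else $Q=P$; let $q$ be $b$'s most preferred node in $Q$; if $q\ne p(b)$, send `break' to $p(b)$ (if $p(b)\ne\bot$), send `accept' to $q$, and set $p(b)\gets q$; send `reject' to every $r\in P\setminus\{q\}$. Red turn, for each $r$: (1) if $c(r)\neq\bot$, receive the message from $c(r)$; if `accept' set $p(r)\gets c(r)$; if `reject' remove $c(r)$ from $C(r)$; then set $c(r)\gets\bot$. (2) If $p(r)\ne\bot$ and $p(r)$ sent `break', remove $p(r)$ from $C(r)$ and set $p(r)\gets\bot$. (3) If $p(r)=\bot$ and $C(r)$ is nonempty, set $c(r)$ to the first element of $C(r)$ and send `propose' to it. Notation: a subscript $i$ denotes the value at the end of round $i$. An edge $\{r,b\}$ is lost when $r$ removes $b$ from $C(r)$;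 $L_i\subseteq E$ is the set of edges lost by the end of round $i$. Let $w:E\to\mathbb{Z}_{>0}$ be a weight function respecting preferences: whenever a node $v$ prefers $x$ over $y$, $w(\{v,x\})\ge w(\{v,y\})$; $w(F)=\sum_{e\in F}w(e)$. The potential of $r\in R$ at the end of round $i$ is $f_i(r)=0$ if $r$ is matched ($p_i(r)\neq\bot$) or $C_i(r)$ is empty, and otherwise $f_i(r)=w(\{r,b\})$ where $b$ is the first element of $C_i(r)$; $f_i(R)=\sum_{r\in R}f_i(r)$. *)

theory Defs
  imports Main
begin

(* Preferences are given as lists: earlier = more preferred. *)
definition prefers :: "'a list \<Rightarrow> 'a \<Rightarrow> 'a \<Rightarrow> bool" where
  "prefers xs x y \<longleftrightarrow> (\<exists>i j. i < j \<and> j < length xs \<and> xs ! i = x \<and> xs ! j = y)"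

definition gs_instance ::
  "'r set \<Rightarrow> 'b set \<Rightarrow> ('r \<times> 'b) set \<Rightarrow> ('r \<Rightarrow> 'b list) \<Rightarrow> ('b \<Rightarrow> 'r list) \<Rightarrow> bool" where
  "gs_instance R B E prefR prefB \<longleftrightarrow>
     finite R \<and> finite B \<and> E \<subseteq> R \<times> B \<and>
     (\<forall>r\<in>R. \<exists>b. (r,b) \<in> E) \<and> (\<forall>b\<in>B. \<exists>r. (r,b) \<in> E) \<and>
     (\<forall>r\<in>R. distinct (prefR r) \<and> set (prefR r) = {b. (r,b) \<in> E}) \<and>
     (\<forall>b\<in>B. distinct (prefB b) \<and> set (prefB b) = {r. (r,b) \<in> E})"

definition respects_prefs ::
  "('r \<times> 'b) set \<Rightarrow> ('r \<Rightarrow> 'b list) \<Rightarrow> ('b \<Rightarrow> 'r list) \<Rightarrow> ('r \<Rightarrow> 'b \<Rightarrow> nat) \<Rightarrow> bool" where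
  "respects_prefs E prefR prefB w \<longleftrightarrow>
     (\<forall>e\<in>E. w (fst e) (snd e) > 0) \<and>
     (\<forall>r b1 b2. (r,b1) \<in> E \<and> (r,b2) \<in> E \<and> prefers (prefR r) b1 b2 \<longrightarrow> w r b1 \<ge> w r b2) \<and>
     (\<forall>b r1 r2. (r1,b) \<in> E \<and> (r2,b) \<in> E \<and> prefers (prefB b) r1 r2 \<longrightarrow> w r1 b \<ge> w r2 b)"

(* State at the end of a round. cand r = c(r) (the node r proposed to in the last
   red turn, or None); lost = set of edges lost so far. *)
record ('r, 'b) gs_state =
  pB   :: "'b \<Rightarrow> 'r option"
  cand :: "'r \<Rightarrow> 'b option"
  pR   :: "'r \<Rightarrow> 'b option"
  Cl   :: "'r \<Rightarrow> 'b list"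
  lost :: "('r \<times> 'b) set"

definition gs_init :: "'r set \<Rightarrow> ('r \<Rightarrow> 'b list) \<Rightarrow> ('r, 'b) gs_state" where
  "gs_init R prefR = \<lparr> pB = (\<lambda>_. None), cand = (\<lambda>_. None), pR = (\<lambda>_. None),
      Cl = (\<lambda>r. if r \<in> R then prefR r else []), lost = {} \<rparr>"

(* Blue turn: P = set of reds that sent 'propose' to b in the previous red turn. *)
definition props :: "('r, 'b) gs_state \<Rightarrow> 'b \<Rightarrow> 'r set" where
  "props st b = {r. cand st r = Some b}"

definition best :: "('b \<Rightarrow> 'r list) \<Rightarrow> ('r, 'b) gs_state \<Rightarrow> 'b \<Rightarrow> 'r" where
  "best prefB st b = hd (filter (\<lambda>x. x \<in> props st b \<union> set_option (pB st b)) (prefB b))"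

definition changes :: "('b \<Rightarrow> 'r list) \<Rightarrow> ('r, 'b) gs_state \<Rightarrow> 'b \<Rightarrow> bool" where
  "changes prefB st b \<longleftrightarrow> props st b \<noteq> {} \<and> Some (best prefB st b) \<noteq> pB st b"

definition msg_accept :: "('b \<Rightarrow> 'r list) \<Rightarrow> ('r, 'b) gs_state \<Rightarrow> 'b \<Rightarrow> 'r \<Rightarrow> bool" where
  "msg_accept prefB st b r \<longleftrightarrow> changes prefB st b \<and> r = best prefB st b"

definition msg_reject :: "('b \<Rightarrow> 'r list) \<Rightarrow> ('r, 'b) gs_state \<Rightarrow> 'b \<Rightarrow> 'r \<Rightarrow> bool" where
  "msg_reject prefB st b r \<longleftrightarrow> props st b \<noteq> {} \<and> r \<in> props st b \<and> r \<noteq> best prefB st b"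

definition msg_break :: "('b \<Rightarrow> 'r list) \<Rightarrow> ('r, 'b) gs_state \<Rightarrow> 'b \<Rightarrow> 'r \<Rightarrow> bool" where
  "msg_break prefB st b r \<longleftrightarrow> changes prefB st b \<and> pB st b = Some r"

definition new_pB :: "('b \<Rightarrow> 'r list) \<Rightarrow> ('r, 'b) gs_state \<Rightarrow> 'b \<Rightarrow> 'r option" where
  "new_pB prefB st b = (if changes prefB st b then Some (best prefB st b) else pB st b)"

(* Red turn for r: returns (new C(r), new c(r), new p(r), edges lost by r in this turn). *)
definition red_update ::
  "('b \<Rightarrow> 'r list) \<Rightarrow> ('r, 'b) gs_state \<Rightarrow> 'r \<Rightarrow> 'b list \<times> 'b option \<times> 'b option \<times> ('r \<times> 'b) set" where
  "red_update prefB st r =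
    (let C0 = Cl st r; p0 = pR st r;
         (C1, p1, L1) = (case cand st r of
             None \<Rightarrow> (C0, p0, {})
           | Some b \<Rightarrow>
               if msg_accept prefB st b r then (C0, Some b, {})
               else if msg_reject prefB st b r
                 then (removeAll b C0, p0, if b \<in> set C0 then {(r, b)} else {})
               else (C0, p0, {}));
         (C2, p2, L2) = (case p1 of
             None \<Rightarrow> (C1, p1, {})
           | Some b' \<Rightarrow>
               if msg_break prefB st b' r
               then (removeAll b' C1, None, if b' \<in> set C1 then {(r, b')} else {})
               else (C1, p1, {}));
         c3 = (if p2 = None \<and> C2 \<noteq> [] then Some (hd C2) else None)
     in (C2, c3, p2, L1 \<union> L2))"

definition gs_round :: "('b \<Rightarrow> 'r list) \<Rightarrow> ('r, 'b) gs_state \<Rightarrow> ('r, 'b) gs_state" where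
  "gs_round prefB st =
     \<lparr> pB = new_pB prefB st,
       cand = (\<lambda>r. fst (snd (red_update prefB st r))),
       pR = (\<lambda>r. fst (snd (snd (red_update prefB st r)))),
       Cl = (\<lambda>r. fst (red_update prefB st r)),
       lost = lost st \<union> (\<Union>r. snd (snd (snd (red_update prefB st r)))) \<rparr>"

(* state at the end of round i (round 0 = initial state) *)
definition gs_state_at ::
  "'r set \<Rightarrow> ('r \<Rightarrow> 'b list) \<Rightarrow> ('b \<Rightarrow> 'r list) \<Rightarrow> nat \<Rightarrow> ('r, 'b) gs_state" where
  "gs_state_at R prefR prefB i = (gs_round prefB ^^ i) (gs_init R prefR)"

definition potential :: "('r \<Rightarrow> 'b \<Rightarrow> nat) \<Rightarrow> ('r, 'b) gs_state \<Rightarrow> 'r \<Rightarrow> nat" where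
  "potential w st r = (if pR st r \<noteq> None \<or> Cl st r = [] then 0 else w r (hd (Cl st r)))"

definition weight_of :: "('r \<Rightarrow> 'b \<Rightarrow> nat) \<Rightarrow> ('r \<times> 'b) set \<Rightarrow> nat" where
  "weight_of w F = (\<Sum>e\<in>F. w (fst e) (snd e))"

end

theory Submission imports Defs begin


lemma accept_not_break: "msg_accept prefB st b r \<Longrightarrow> \<not> msg_break prefB st b r"
  unfolding msg_accept_def msg_break_def changes_def by auto

lemma ru_A: "cand st r = Some b \<Longrightarrow> msg_accept prefB st b r \<Longrightarrow>
  red_update prefB st r = (Cl st r, None, Some b, {})"
  using accept_not_break[of prefB st b r]
  by (simp add: red_update_def Let_def)

lemma ru_B: "cand st r = Some b \<Longrightarrow> \<not> msg_accept prefB st b r \<Longrightarrow> msg_reject prefB st b r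
  \<Longrightarrow> pR st r = None \<Longrightarrow> b \<in> set (Cl st r) \<Longrightarrow>
  red_update prefB st r = (removeAll b (Cl st r),
     (if removeAll b (Cl st r) \<noteq> [] then Some (hd (removeAll b (Cl st r))) else None), None, {(r,b)})"
  by (simp add: red_update_def Let_def)

lemma ru_C: "cand st r = Some b \<Longrightarrow> \<not> msg_accept prefB st b r \<Longrightarrow> \<not> msg_reject prefB st b r
  \<Longrightarrow> pR st r = None \<Longrightarrow>
  red_update prefB st r = (Cl st r, (if Cl st r \<noteq> [] then Some (hd (Cl st r)) else None), None, {})"
  by (simp add: red_update_def Let_def)

lemma ru_D: "cand st r = None \<Longrightarrow> pR st r = Some b \<Longrightarrow> msg_break prefB st b r
  \<Longrightarrow> b \<in> set (Cl st r) \<Longrightarrow>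
  red_update prefB st r = (removeAll b (Cl st r),
     (if removeAll b (Cl st r) \<noteq> [] then Some (hd (removeAll b (Cl st r))) else None), None, {(r,b)})"
  by (simp add: red_update_def Let_def)

lemma ru_E: "cand st r = None \<Longrightarrow> pR st r = Some b \<Longrightarrow> \<not> msg_break prefB st b r \<Longrightarrow>
  red_update prefB st r = (Cl st r, None, Some b, {})"
  by (simp add: red_update_def Let_def)

lemma ru_F: "cand st r = None \<Longrightarrow> pR st r = None \<Longrightarrow>
  red_update prefB st r = (Cl st r, (if Cl st r \<noteq> [] then Some (hd (Cl st r)) else None), None, {})"
  by (simp add: red_update_def Let_def)


definition invs :: "'r set \<Rightarrow> ('r \<times> 'b) set \<Rightarrow> ('r \<Rightarrow> 'b list) \<Rightarrow> ('r,'b) gs_state \<Rightarrow> bool" where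
 "invs R E prefR st \<longleftrightarrow>
  lost st \<subseteq> E \<and>
  (\<forall>r\<in>R. Cl st r = filter (\<lambda>b. (r,b) \<notin> lost st) (prefR r)) \<and>
  (\<forall>r. r \<notin> R \<longrightarrow> Cl st r = []) \<and>
  (\<forall>b r. pB st b = Some r \<longrightarrow> pR st r = Some b) \<and>
  (\<forall>r b. cand st r = Some b \<longrightarrow> pR st r = None \<and> Cl st r \<noteq> [] \<and> hd (Cl st r) = b) \<and>
  (\<forall>r b. pR st r = Some b \<longrightarrow> Cl st r \<noteq> [] \<and> hd (Cl st r) = b)"

lemma removeAll_hd: "distinct xs \<Longrightarrow> xs \<noteq> [] \<Longrightarrow> removeAll (hd xs) xs = tl xs"
  by (cases xs) (auto simp: distinct_removeAll)

lemma invs_distinct: "invs R E prefR st \<Longrightarrow> (\<forall>r\<in>R. distinct (prefR r)) \<Longrightarrow> distinct (Cl st r)"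
  unfolding invs_def by (cases "r \<in> R") auto

lemma ru_char:
  assumes inv: "invs R E prefR st" and dist: "\<forall>r\<in>R. distinct (prefR r)"
  shows
 "(\<exists>b. cand st r = Some b \<and> msg_accept prefB st b r \<and> pR st r = None \<and> Cl st r \<noteq> [] \<and> hd (Cl st r) = b \<and>
     red_update prefB st r = (Cl st r, None, Some b, {})) \<or>
  (\<exists>b. cand st r = Some b \<and> \<not> msg_accept prefB st b r \<and> msg_reject prefB st b r \<and> pR st r = None \<and>
     Cl st r \<noteq> [] \<and> hd (Cl st r) = b \<and>
     red_update prefB st r = (tl (Cl st r), (if tl (Cl st r) \<noteq> [] then Some (hd (tl (Cl st r))) else None), None, {(r,b)})) \<or>
  (\<exists>b. cand st r = None \<and> pR st r = Some b \<and> msg_break prefB st b r \<and>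
     Cl st r \<noteq> [] \<and> hd (Cl st r) = b \<and>
     red_update prefB st r = (tl (Cl st r), (if tl (Cl st r) \<noteq> [] then Some (hd (tl (Cl st r))) else None), None, {(r,b)})) \<or>
  (\<exists>b. cand st r = None \<and> pR st r = Some b \<and> \<not> msg_break prefB st b r \<and>
     Cl st r \<noteq> [] \<and> hd (Cl st r) = b \<and>
     red_update prefB st r = (Cl st r, None, Some b, {})) \<or>
  (cand st r = None \<and> pR st r = None \<and>
     red_update prefB st r = (Cl st r, (if Cl st r \<noteq> [] then Some (hd (Cl st r)) else None), None, {}))"
proof -
  have d: "distinct (Cl st r)" using invs_distinct[OF inv dist] .
  have I1: "\<And>b r. pB st b = Some r \<Longrightarrow> pR st r = Some b"
   and I2: "\<And>b. cand st r = Some b \<Longrightarrow> pR st r = None \<and> Cl st r \<noteq> [] \<and> hd (Cl st r) = b"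
   and I3: "\<And>b. pR st r = Some b \<Longrightarrow> Cl st r \<noteq> [] \<and> hd (Cl st r) = b"
    using inv unfolding invs_def by blast+
  show ?thesis
  proof (cases "cand st r")
    case (Some b)
    note c = I2[OF Some]
    show ?thesis
    proof (cases "msg_accept prefB st b r")
      case True
      then show ?thesis using ru_A[OF Some True] c Some by auto
    next
      case na: False
      show ?thesis
      proof (cases "msg_reject prefB st b r")
        case True
        have "b \<in> set (Cl st r)" using c by (metis list.set_sel(1))
        then show ?thesis using ru_B[OF Some na True] c Some na True removeAll_hd[OF d] by auto
      next
        case False
        have "r \<in> props st b" using Some by (simp add: props_def)
        then have "r = best prefB st b" using False by (auto simp: msg_reject_def)
        moreover have "\<not> changes prefB st b" using na \<open>r = best prefB st b\<close> by (simp add: msg_accept_def)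
        ultimately have "pB st b = Some r" using \<open>r \<in> props st b\<close> by (auto simp: changes_def)
        then have False using I1 c by fastforce
        then show ?thesis ..
      qed
    qed
  next
    case None
    show ?thesis
    proof (cases "pR st r")
      case None2: None
      then show ?thesis using ru_F[OF None None2] None by auto
    next
      case (Some b)
      note c = I3[OF Some]
      show ?thesis
      proof (cases "msg_break prefB st b r")
        case True
        have "b \<in> set (Cl st r)" using c by (metis list.set_sel(1))
        then show ?thesis using ru_D[OF None Some True] c None Some True removeAll_hd[OF d] by auto
      next
        case False
        then show ?thesis using ru_E[OF None Some False] c None Some by auto
      qed
    qed
  qed
qed


lemma inst_facts:
  assumes "gs_instance R B E prefR prefB"
  shows "E \<subseteq> R \<times> B" "finite E" "\<And>r. r \<in> R \<Longrightarrow> distinct (prefR r)"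
    "\<And>r. r \<in> R \<Longrightarrow> set (prefR r) = {b. (r,b) \<in> E}"
    "\<And>b. b \<in> B \<Longrightarrow> distinct (prefB b)"
    "\<And>b. b \<in> B \<Longrightarrow> set (prefB b) = {r. (r,b) \<in> E}"
proof -
  show "E \<subseteq> R \<times> B" using assms by (simp add: gs_instance_def)
  moreover have "finite (R \<times> B)" using assms by (simp add: gs_instance_def)
  ultimately show "finite E" using finite_subset by blast
qed (use assms in \<open>auto simp: gs_instance_def\<close>)

definition P4 :: "('r,'b) gs_state \<Rightarrow> bool" where
  "P4 st \<longleftrightarrow> (\<forall>r. pR st r = None \<and> cand st r = None \<longrightarrow> Cl st r = [])"

lemma round_simps:
  "pB (gs_round prefB st) = new_pB prefB st"
  "cand (gs_round prefB st) r = fst (snd (red_update prefB st r))"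
  "pR (gs_round prefB st) r = fst (snd (snd (red_update prefB st r)))"
  "Cl (gs_round prefB st) r = fst (red_update prefB st r)"
  "lost (gs_round prefB st) = lost st \<union> (\<Union>r. snd (snd (snd (red_update prefB st r))))"
  by (simp_all add: gs_round_def)

lemma P4_round:
  assumes "invs R E prefR st" "\<forall>r\<in>R. distinct (prefR r)"
  shows "P4 (gs_round prefB st)"
  unfolding P4_def round_simps
proof (intro allI impI)
  fix r assume h: "fst (snd (snd (red_update prefB st r))) = None \<and> fst (snd (red_update prefB st r)) = None"
  from ru_char[OF assms, of r prefB] h show "fst (red_update prefB st r) = []"
    by (auto split: if_splits)
qed

lemma new_lost_r:
  assumes "invs R E prefR st" "\<forall>r\<in>R. distinct (prefR r)"
  shows "snd (snd (snd (red_update prefB st r))) = {} \<and> fst (red_update prefB st r) = Cl st r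
       \<or> (Cl st r \<noteq> [] \<and> snd (snd (snd (red_update prefB st r))) = {(r, hd (Cl st r))}
          \<and> fst (red_update prefB st r) = tl (Cl st r))"
  using ru_char[OF assms, of r prefB] by auto

lemma lost_round_iff:
  assumes "invs R E prefR st" "\<forall>r\<in>R. distinct (prefR r)"
  shows "(r,x) \<in> lost (gs_round prefB st) \<longleftrightarrow> (r,x) \<in> lost st \<or> (r,x) \<in> snd (snd (snd (red_update prefB st r)))"
proof -
  have "\<And>r'. (r,x) \<in> snd (snd (snd (red_update prefB st r'))) \<Longrightarrow> r' = r"
    using new_lost_r[OF assms] by fastforce
  then show ?thesis unfolding round_simps by blast
qed

lemma filter_hd_tl:
  assumes "distinct xs" "filter P xs \<noteq> []"
  shows "filter (\<lambda>x. P x \<and> x \<noteq> hd (filter P xs)) xs = tl (filter P xs)"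
proof -
  have "filter (\<lambda>x. P x \<and> x \<noteq> hd (filter P xs)) xs = removeAll (hd (filter P xs)) (filter P xs)"
    by (auto simp: removeAll_filter_not_eq filter_filter intro!: filter_cong)
  also have "\<dots> = tl (filter P xs)" using removeAll_hd[of "filter P xs"] assms by simp
  finally show ?thesis .
qed

lemma best_in:
  assumes "props st b \<noteq> {}" "props st b \<subseteq> set (prefB b)"
  shows "best prefB st b \<in> props st b \<union> set_option (pB st b)"
proof -
  let ?Q = "\<lambda>x. x \<in> props st b \<union> set_option (pB st b)"
  have "filter ?Q (prefB b) \<noteq> []" using assms by (auto simp: filter_empty_conv)
  from hd_in_set[OF this] show ?thesis unfolding best_def set_filter by blast
qed

lemma props_sub:
  assumes "invs R E prefR st" "gs_instance R B E prefR prefB"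
  shows "props st b \<subseteq> set (prefB b)"
proof
  fix r assume "r \<in> props st b"
  then have c: "cand st r = Some b" by (simp add: props_def)
  have I2: "Cl st r \<noteq> [] \<and> hd (Cl st r) = b" using assms(1) c unfolding invs_def by blast
  have rR: "r \<in> R" using assms(1) I2 unfolding invs_def by blast
  have "b \<in> set (Cl st r)" using I2 by (metis list.set_sel(1))
  then have "b \<in> set (prefR r)" using assms(1) rR unfolding invs_def by auto
  then have "(r,b) \<in> E" using inst_facts(4)[OF assms(2) rR] by auto
  then show "r \<in> set (prefB b)" using inst_facts(1,6)[OF assms(2)] by auto
qed


lemma invs_round:
  assumes inst: "gs_instance R B E prefR prefB" and inv: "invs R E prefR st"
  shows "invs R E prefR (gs_round prefB st)"
proof -
  have dist: "\<forall>r\<in>R. distinct (prefR r)" using inst_facts(3)[OF inst] by blast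
  note ruc = ru_char[OF inv dist, where prefB=prefB]
  note nl = new_lost_r[OF inv dist, where prefB=prefB]
  have Cfil: "\<And>r. r \<in> R \<Longrightarrow> Cl st r = filter (\<lambda>b. (r,b) \<notin> lost st) (prefR r)"
    and CnR: "\<And>r. r \<notin> R \<Longrightarrow> Cl st r = []"
    and lE: "lost st \<subseteq> E"
    and I1: "\<And>b r. pB st b = Some r \<Longrightarrow> pR st r = Some b"
    and I2: "\<And>r b. cand st r = Some b \<Longrightarrow> pR st r = None \<and> Cl st r \<noteq> [] \<and> hd (Cl st r) = b"
    using inv unfolding invs_def by blast+
  let ?st = "gs_round prefB st"
  have A: "lost ?st \<subseteq> E"
  proof
    fix e assume "e \<in> lost ?st"
    then obtain r x where e: "e = (r,x)" and "(r,x) \<in> lost st \<or> (r,x) \<in> snd (snd (snd (red_update prefB st r)))"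
      using lost_round_iff[OF inv dist] by (metis surj_pair)
    then consider "(r,x) \<in> lost st" | "Cl st r \<noteq> []" "x = hd (Cl st r)" using nl[of r] by auto
    then show "e \<in> E"
    proof cases
      case 1 then show ?thesis using lE e by auto
    next
      case 2
      then have rR: "r \<in> R" using CnR by blast
      have "x \<in> set (Cl st r)" using 2 by simp
      then have "x \<in> set (prefR r)" using Cfil[OF rR] by auto
      then show ?thesis using inst_facts(4)[OF inst rR] e by auto
    qed
  qed
  have B: "\<forall>r\<in>R. Cl ?st r = filter (\<lambda>b. (r,b) \<notin> lost ?st) (prefR r)"
  proof
    fix r assume rR: "r \<in> R"
    have eq: "(\<lambda>b. (r,b) \<notin> lost ?st) = (\<lambda>b. (r,b) \<notin> lost st \<and> (r,b) \<notin> snd (snd (snd (red_update prefB st r))))"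
      using lost_round_iff[OF inv dist] by blast
    show "Cl ?st r = filter (\<lambda>b. (r,b) \<notin> lost ?st) (prefR r)"
      using nl[of r]
    proof (elim disjE conjE)
      assume "snd (snd (snd (red_update prefB st r))) = {}" "fst (red_update prefB st r) = Cl st r"
      then show ?thesis using Cfil[OF rR] unfolding eq round_simps(4) by simp
    next
      assume h: "Cl st r \<noteq> []" "snd (snd (snd (red_update prefB st r))) = {(r, hd (Cl st r))}"
        "fst (red_update prefB st r) = tl (Cl st r)"
      have "filter (\<lambda>b. (r,b) \<notin> lost st \<and> b \<noteq> hd (Cl st r)) (prefR r) = tl (Cl st r)"
        using filter_hd_tl[of "prefR r" "\<lambda>b. (r,b) \<notin> lost st"] dist rR h(1) Cfil[OF rR] by simp
      then show ?thesis using h unfolding eq round_simps(4) by simp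
    qed
  qed
  have C: "\<forall>r. r \<notin> R \<longrightarrow> Cl ?st r = []"
    unfolding round_simps
  proof (intro allI impI)
    fix r assume "r \<notin> R"
    then show "fst (red_update prefB st r) = []" using nl[of r] CnR[of r] by auto
  qed
  have D: "\<forall>b r. pB ?st b = Some r \<longrightarrow> pR ?st r = Some b"
  proof (intro allI impI)
    fix b r assume h: "pB ?st b = Some r"
    show "pR ?st r = Some b"
    proof (cases "changes prefB st b")
      case True
      then have rb: "r = best prefB st b" using h by (simp add: round_simps new_pB_def)
      have "props st b \<noteq> {}" using True by (simp add: changes_def)
      from best_in[where prefB=prefB, OF this props_sub[OF inv inst, of b]]
      have "r \<in> props st b" using True rb by (auto simp: changes_def)
      then have c: "cand st r = Some b" by (simp add: props_def)
      have acc: "msg_accept prefB st b r" using True rb by (simp add: msg_accept_def)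
      show ?thesis using ruc[of r] c acc unfolding round_simps by auto
    next
      case False
      then have p: "pB st b = Some r" using h by (simp add: round_simps new_pB_def)
      then have "pR st r = Some b" using I1 by blast
      moreover have "\<not> msg_break prefB st b r" using False by (simp add: msg_break_def)
      ultimately show ?thesis using ruc[of r] unfolding round_simps by auto
    qed
  qed
  have E: "\<forall>r b. cand ?st r = Some b \<longrightarrow> pR ?st r = None \<and> Cl ?st r \<noteq> [] \<and> hd (Cl ?st r) = b"
    unfolding round_simps
  proof (intro allI impI)
    fix r b assume "fst (snd (red_update prefB st r)) = Some b"
    then show "fst (snd (snd (red_update prefB st r))) = None \<and> fst (red_update prefB st r) \<noteq> [] \<and> hd (fst (red_update prefB st r)) = b"
      using ruc[of r] by (auto split: if_splits)
  qed
  have F: "\<forall>r b. pR ?st r = Some b \<longrightarrow> Cl ?st r \<noteq> [] \<and> hd (Cl ?st r) = b"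
    unfolding round_simps
  proof (intro allI impI)
    fix r b assume "fst (snd (snd (red_update prefB st r))) = Some b"
    then show "fst (red_update prefB st r) \<noteq> [] \<and> hd (fst (red_update prefB st r)) = b"
      using ruc[of r] by auto
  qed
  show ?thesis unfolding invs_def using A B C D E F by blast
qed

lemma invs_init:
  assumes inst: "gs_instance R B E prefR prefB"
  shows "invs R E prefR (gs_init R prefR)"
  using inst_facts(4)[OF inst] unfolding invs_def gs_init_def
  by (auto simp: hd_in_set)


lemma prefers_Cons: "prefers xs x y \<Longrightarrow> prefers (a # xs) x y"
  unfolding prefers_def
  by (metis Suc_less_eq length_Cons nth_Cons_Suc)

lemma prefers_hd: "y \<in> set xs \<Longrightarrow> prefers (a # xs) a y"
  unfolding prefers_def
  by (metis in_set_conv_nth length_Cons not_less_eq nth_Cons_0 nth_Cons_Suc zero_less_Suc)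

lemma prefers_filter: "distinct xs \<Longrightarrow> filter P xs = b # ys \<Longrightarrow> c \<in> set ys \<Longrightarrow> prefers xs b c"
proof (induction xs arbitrary: ys)
  case Nil then show ?case by simp
next
  case (Cons a xs)
  show ?case
  proof (cases "P a")
    case True
    then have "b = a" "ys = filter P xs" using Cons.prems by auto
    then show ?thesis using Cons.prems prefers_hd by auto
  next
    case False
    then have "filter P xs = b # ys" using Cons.prems by auto
    then show ?thesis using Cons prefers_Cons by auto
  qed
qed

lemma tl_weight:
  assumes inst: "gs_instance R B E prefR prefB" and resp: "respects_prefs E prefR prefB w"
    and inv: "invs R E prefR st" and rR: "r \<in> R" and x: "x \<in> set (tl (Cl st r))"
  shows "w r x \<le> w r (hd (Cl st r))"
proof -
  have C: "Cl st r = filter (\<lambda>b. (r,b) \<notin> lost st) (prefR r)" using inv rR unfolding invs_def by blast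
  have ne: "Cl st r \<noteq> []" using x by auto
  then have eq: "filter (\<lambda>b. (r,b) \<notin> lost st) (prefR r) = hd (Cl st r) # tl (Cl st r)" using C by simp
  have p: "prefers (prefR r) (hd (Cl st r)) x"
    using prefers_filter[OF _ eq x] inst_facts(3)[OF inst rR] by blast
  have "hd (Cl st r) \<in> set (prefR r)" "x \<in> set (prefR r)"
    using C ne x by (metis filter_is_subset hd_in_set subsetD, metis C filter_is_subset list.set_sel(2) ne subsetD)
  then have "(r, hd (Cl st r)) \<in> E" "(r,x) \<in> E" using inst_facts(4)[OF inst rR] by auto
  then show ?thesis using resp p unfolding respects_prefs_def by blast
qed

lemma loss_r:
  assumes inst: "gs_instance R B E prefR prefB" and resp: "respects_prefs E prefR prefB w"
    and inv: "invs R E prefR st" and p4: "P4 st" and rR: "r \<in> R"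
    and pos: "potential w (gs_round prefB st) r > 0"
  shows "snd (snd (snd (red_update prefB st r))) = {(r, hd (Cl st r))} \<and> Cl st r \<noteq> []
     \<and> (r, hd (Cl st r)) \<notin> lost st \<and> potential w (gs_round prefB st) r \<le> w r (hd (Cl st r))"
proof -
  have dist: "\<forall>r\<in>R. distinct (prefR r)" using inst_facts(3)[OF inst] by blast
  have C: "Cl st r = filter (\<lambda>b. (r,b) \<notin> lost st) (prefR r)" using inv rR unfolding invs_def by blast
  have h: "fst (snd (snd (red_update prefB st r))) = None" "fst (red_update prefB st r) \<noteq> []"
    "potential w (gs_round prefB st) r = w r (hd (fst (red_update prefB st r)))"
    using pos unfolding potential_def round_simps by (auto split: if_splits)
  have P4r: "pR st r = None \<and> cand st r = None \<Longrightarrow> Cl st r = []" using p4 unfolding P4_def by blast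
  have case2: "snd (snd (snd (red_update prefB st r))) = {(r, hd (Cl st r))} \<and> Cl st r \<noteq> []
      \<and> fst (red_update prefB st r) = tl (Cl st r)"
    using ru_char[OF inv dist, where prefB=prefB and r=r] h P4r by auto
  have "hd (Cl st r) \<in> set (Cl st r)" using case2 by simp
  then have nl: "(r, hd (Cl st r)) \<notin> lost st" using C by simp
  have "hd (tl (Cl st r)) \<in> set (tl (Cl st r))" using case2 h(2) by simp
  from tl_weight[OF inst resp inv rR this] show ?thesis using case2 nl h(3) by simp
qed


lemma loss_sum:
  assumes inst: "gs_instance R B E prefR prefB" and resp: "respects_prefs E prefR prefB w"
    and inv: "invs R E prefR st" and p4: "P4 st"
  shows "weight_of w (lost st) + (\<Sum>r\<in>R. potential w (gs_round prefB st) r) \<le> weight_of w (lost (gs_round prefB st))"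
proof -
  let ?st = "gs_round prefB st"
  let ?f = "\<lambda>e. w (fst e) (snd e)"
  define S where "S = {r\<in>R. 0 < potential w ?st r}"
  define N where "N = (\<lambda>r. (r, hd (Cl st r))) ` S"
  have fR: "finite R" using inst by (simp add: gs_instance_def)
  have fE: "finite E" using inst_facts(2)[OF inst] .
  have l'E: "lost ?st \<subseteq> E" using invs_round[OF inst inv] unfolding invs_def by blast
  have fl': "finite (lost ?st)" using finite_subset[OF l'E fE] .
  have sub: "lost st \<subseteq> lost ?st" by (simp add: round_simps)
  have NS: "N \<subseteq> lost ?st - lost st"
  proof
    fix e assume "e \<in> N"
    then obtain r where r: "r \<in> S" "e = (r, hd (Cl st r))" unfolding N_def by blast
    then have "r \<in> R" "0 < potential w ?st r" unfolding S_def by auto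
    from loss_r[OF inst resp inv p4 this] r show "e \<in> lost ?st - lost st"
      unfolding round_simps by blast
  qed
  have "weight_of w (lost ?st) = weight_of w (lost ?st - lost st) + weight_of w (lost st)"
    unfolding weight_of_def using sum.subset_diff[OF sub fl'] .
  moreover have "weight_of w N \<le> weight_of w (lost ?st - lost st)"
    unfolding weight_of_def by (rule sum_mono2) (use fl' NS in auto)
  moreover have "weight_of w N = (\<Sum>r\<in>S. w r (hd (Cl st r)))"
    unfolding weight_of_def N_def by (subst sum.reindex) (auto simp: inj_on_def)
  moreover have "(\<Sum>r\<in>S. potential w ?st r) \<le> (\<Sum>r\<in>S. w r (hd (Cl st r)))"
  proof (rule sum_mono)
    fix r assume "r \<in> S"
    then have "r \<in> R" "0 < potential w ?st r" unfolding S_def by auto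
    from loss_r[OF inst resp inv p4 this] show "potential w ?st r \<le> w r (hd (Cl st r))" by blast
  qed
  moreover have "(\<Sum>r\<in>R. potential w ?st r) = (\<Sum>r\<in>S. potential w ?st r)"
    by (rule sum.mono_neutral_right) (use fR in \<open>auto simp: S_def\<close>)
  ultimately show ?thesis by linarith
qed


lemma mono_pot:
  assumes inst: "gs_instance R B E prefR prefB" and resp: "respects_prefs E prefR prefB w"
    and inv: "invs R E prefR st" and p4: "P4 st"
  shows "(\<Sum>r\<in>R. potential w (gs_round prefB st) r) \<le> (\<Sum>r\<in>R. potential w st r)"
proof -
  let ?st = "gs_round prefB st"
  have dist: "\<forall>r\<in>R. distinct (prefR r)" using inst_facts(3)[OF inst] by blast
  have fR: "finite R" using inst by (simp add: gs_instance_def)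
  have CnR: "\<And>r. r \<notin> R \<Longrightarrow> Cl st r = []"
    and I2: "\<And>r b. cand st r = Some b \<Longrightarrow> pR st r = None \<and> Cl st r \<noteq> [] \<and> hd (Cl st r) = b"
    and Cfil: "\<And>r. r \<in> R \<Longrightarrow> Cl st r = filter (\<lambda>b. (r,b) \<notin> lost st) (prefR r)"
    using inv unfolding invs_def by blast+
  have potc: "\<And>r b. cand st r = Some b \<Longrightarrow> potential w st r = w r b"
    using I2 unfolding potential_def by auto
  have candR: "\<And>r b. cand st r = Some b \<Longrightarrow> r \<in> R" using I2 CnR by blast
  define S where "S = {r\<in>R. 0 < potential w ?st r}"
  define i where "i = (\<lambda>y. case cand st y of None \<Rightarrow> y
     | Some b \<Rightarrow> if msg_accept prefB st b y \<and> pB st b \<noteq> None then the (pB st b) else y)"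
  have "(\<Sum>r\<in>S. potential w ?st r) \<le> (\<Sum>r\<in>R. potential w st r)"
  proof (rule sum_le_included[where i = i])
    show "finite S" using fR by (simp add: S_def)
    show "finite R" by (rule fR)
    show "\<forall>y\<in>R. 0 \<le> potential w st y" by simp
    show "\<forall>x\<in>S. \<exists>y\<in>R. i y = x \<and> potential w ?st x \<le> potential w st y"
    proof
      fix x assume "x \<in> S"
      then have xR: "x \<in> R" and pos: "0 < potential w ?st x" unfolding S_def by auto
      note L = loss_r[OF inst resp inv p4 xR pos]
      have h: "fst (snd (snd (red_update prefB st x))) = None"
        using pos unfolding potential_def round_simps by (auto split: if_splits)
      have P4r: "pR st x = None \<and> cand st x = None \<Longrightarrow> Cl st x = []" using p4 unfolding P4_def by blast
      have "(\<exists>b. cand st x = Some b \<and> \<not> msg_accept prefB st b x) \<or>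
            (\<exists>b. cand st x = None \<and> pR st x = Some b \<and> msg_break prefB st b x \<and> hd (Cl st x) = b)"
        using ru_char[OF inv dist, where prefB=prefB and r=x] h L by auto
      then show "\<exists>y\<in>R. i y = x \<and> potential w ?st x \<le> potential w st y"
      proof (elim disjE exE conjE)
        fix b assume c: "cand st x = Some b" and na: "\<not> msg_accept prefB st b x"
        have "i x = x" using c na by (simp add: i_def)
        moreover have "potential w ?st x \<le> potential w st x" using L potc[OF c] I2[OF c] by simp
        ultimately show ?thesis using xR by blast
      next
        fix b assume c: "cand st x = None" and p: "pR st x = Some b" and br: "msg_break prefB st b x"
          and hb: "hd (Cl st x) = b"
        have ch: "changes prefB st b" and pb: "pB st b = Some x" using br by (auto simp: msg_break_def)
        define y where "y = best prefB st b"
        have pne: "props st b \<noteq> {}" using ch by (simp add: changes_def)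
        have yin: "y \<in> props st b \<union> set_option (pB st b)"
          unfolding y_def by (rule best_in[where prefB=prefB, OF pne props_sub[OF inv inst, of b]])
        have yx: "y \<noteq> x" using ch pb by (auto simp: changes_def y_def)
        then have yp: "y \<in> props st b" using yin pb by auto
        then have cy: "cand st y = Some b" by (simp add: props_def)
        have acc: "msg_accept prefB st b y" using ch by (simp add: msg_accept_def y_def)
        have iy: "i y = x" using cy acc pb by (simp add: i_def)
        have yR: "y \<in> R" using candR[OF cy] .
        have Cne: "Cl st x \<noteq> []" using L by blast
        have "b \<in> set (prefR x)" using Cfil[OF xR] Cne hb by (metis filter_is_subset hd_in_set subsetD)
        then have xbE: "(x,b) \<in> E" using inst_facts(4)[OF inst xR] by auto
        have ybE: "(y,b) \<in> E"
          using props_sub[OF inv inst, of b] yp inst_facts(1,6)[OF inst] xbE by blast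
        have bB: "b \<in> B" using xbE inst_facts(1)[OF inst] by blast
        let ?Q = "\<lambda>z. z \<in> props st b \<union> set_option (pB st b)"
        have xfil: "x \<in> set (filter ?Q (prefB b))" using pb xbE inst_facts(6)[OF inst bB] by auto
        then have fne: "filter ?Q (prefB b) \<noteq> []" by (metis empty_iff list.set(1))
        have eqf: "filter ?Q (prefB b) = y # tl (filter ?Q (prefB b))"
          using fne unfolding y_def best_def by simp
        have "x \<in> set (tl (filter ?Q (prefB b)))" using xfil yx eqf by (metis set_ConsD)
        from prefers_filter[OF _ eqf this] inst_facts(5)[OF inst bB]
        have "prefers (prefB b) y x" by blast
        then have wxy: "w x b \<le> w y b" using resp xbE ybE unfolding respects_prefs_def by blast
        have "potential w ?st x \<le> w x b" using L hb by simp
        also have "\<dots> \<le> potential w st y" using wxy potc[OF cy] by simp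
        finally show ?thesis using iy yR by blast
      qed
    qed
  qed
  moreover have "(\<Sum>r\<in>R. potential w ?st r) = (\<Sum>r\<in>S. potential w ?st r)"
    by (rule sum.mono_neutral_right) (use fR in \<open>auto simp: S_def\<close>)
  ultimately show ?thesis by linarith
qed


lemma state_Suc: "gs_state_at R prefR prefB (Suc k) = gs_round prefB (gs_state_at R prefR prefB k)"
  by (simp add: gs_state_at_def)

lemma invs_at:
  assumes inst: "gs_instance R B E prefR prefB"
  shows "invs R E prefR (gs_state_at R prefR prefB k)"
proof (induction k)
  case 0 then show ?case using invs_init[OF inst] by (simp add: gs_state_at_def)
next
  case (Suc k) then show ?case using invs_round[OF inst] by (simp add: state_Suc)
qed

lemma P4_at:
  assumes inst: "gs_instance R B E prefR prefB"
  shows "P4 (gs_state_at R prefR prefB (Suc k))"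
proof -
  have "\<forall>r\<in>R. distinct (prefR r)" using inst_facts(3)[OF inst] by blast
  then show ?thesis unfolding state_Suc using P4_round[OF invs_at[OF inst]] by blast
qed

lemma main_aux:
  assumes inst: "gs_instance R B E prefR prefB" and resp: "respects_prefs E prefR prefB w"
  shows "m * (\<Sum>r\<in>R. potential w (gs_state_at R prefR prefB (Suc m)) r)
           \<le> weight_of w (lost (gs_state_at R prefR prefB (Suc m)))"
proof (induction m)
  case 0 then show ?case by simp
next
  case (Suc m)
  let ?s = "gs_state_at R prefR prefB (Suc m)"
  let ?s' = "gs_state_at R prefR prefB (Suc (Suc m))"
  have eq: "?s' = gs_round prefB ?s" by (rule state_Suc)
  have L: "weight_of w (lost ?s) + (\<Sum>r\<in>R. potential w ?s' r) \<le> weight_of w (lost ?s')"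
    unfolding eq by (rule loss_sum[OF inst resp invs_at[OF inst] P4_at[OF inst]])
  have M: "(\<Sum>r\<in>R. potential w ?s' r) \<le> (\<Sum>r\<in>R. potential w ?s r)"
    unfolding eq by (rule mono_pot[OF inst resp invs_at[OF inst] P4_at[OF inst]])
  have "m * (\<Sum>r\<in>R. potential w ?s' r) \<le> m * (\<Sum>r\<in>R. potential w ?s r)"
    using M by (rule mult_le_mono2)
  then show ?case using Suc.IH L unfolding mult_Suc by linarith
qed

theorem lemma4:
  fixes R :: "'r set" and B :: "'b set" and E :: "('r \<times> 'b) set"
    and prefR :: "'r \<Rightarrow> 'b list" and prefB :: "'b \<Rightarrow> 'r list"
    and w :: "'r \<Rightarrow> 'b \<Rightarrow> nat" and i :: nat
  assumes "gs_instance R B E prefR prefB"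
    and "respects_prefs E prefR prefB w"
    and "i \<ge> 2"
  shows "weight_of w (lost (gs_state_at R prefR prefB i))
           \<ge> (i - 1) * (\<Sum>r\<in>R. potential w (gs_state_at R prefR prefB i) r)"
proof -
  obtain m where i: "i = Suc m" using assms(3) by (cases i) auto
  show ?thesis using main_aux[OF assms(1,2), of m] unfolding i by simp
qed

end
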